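(* Let $d$ and $r$ be odd integers satisfying $d\geqslant 3$, $r\leqslant d-4$ and $\gcd(d,r)=1$. Let $n$ be an integer such that $n\geqslant (d-r)/2$ and $n\equiv -r/2\pmod{d}$ (that is, $2n\equiv -r\pmod d$). Then none of the numbers in the arithmetic progression \[ \frac{d+r}{2},\ \frac{d+r}{2}+d,\ \ldots,\ \frac{d+r}{2}+dn-2n-r-d \] (with common difference $d$) is a multiple of $n$. *)

theory Defs
  imports "HOL-Number_Theory.Cong"
begin

end

theory Submission
  imports Defs
begin

theorem lemma4:
  fixes d r n :: int
  assumes "odd d" and "odd r" and "d \<ge> 3" and "r \<le> d - 4" and "gcd d r = 1"
    and "n \<ge> (d - r) div 2"
    and "[2 * n = - r] (mod d)"
  shows "\<forall>k::int. 0 \<le> k \<longrightarrow>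
           (d + r) div 2 + d * k \<le> (d + r) div 2 + d * n - 2 * n - r - d \<longrightarrow>
           \<not> (n dvd ((d + r) div 2 + d * k))"
proof (intro allI impI)
  fix k :: int
  assume k0: "0 \<le> k"
    and kb: "(d + r) div 2 + d * k \<le> (d + r) div 2 + d * n - 2 * n - r - d"
  have "d dvd 2 * n - (- r)" using assms(7) by (simp add: cong_iff_dvd_diff)
  then obtain t where ht: "2 * n + r = d * t" by (auto simp: dvd_def)
  have "even (d - r)" using assms(1,2) by simp
  hence e1: "2 * ((d - r) div 2) = d - r" by simp
  have "even (d + r)" using assms(1,2) by simp
  hence e2: "2 * ((d + r) div 2) = d + r" by simp
  have n2: "n \<ge> 2" using e1 assms(4,6) by linarith
  have dpos: "d > 0" using assms(3) by simp
  have "d * t \<ge> d * 1" using ht e1 assms(6) by linarith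
  hence t1: "t \<ge> 1" using dpos by simp
  have "odd (2 * n + r)" using assms(2) by simp
  hence "odd (d * t)" using ht by simp
  hence todd: "odd t" by simp
  have "d * k \<le> d * (n - t - 1)" using kb ht by (simp add: algebra_simps)
  hence kle: "k \<le> n - t - 1" using dpos by simp
  show "\<not> n dvd (d + r) div 2 + d * k"
  proof
    assume ndvd: "n dvd (d + r) div 2 + d * k"
    have eq: "d * (1 + t + 2 * k) = 2 * ((d + r) div 2 + d * k) + 2 * n"
      using e2 ht by (simp add: algebra_simps)
    have "n dvd d * (1 + t + 2 * k)" unfolding eq using ndvd by (metis dvd_add dvd_mult dvd_triv_right)
    moreover have "coprime n d"
    proof (rule coprimeI)
      fix c assume c1: "c dvd n" and c2: "c dvd d"
      have "c dvd d * t - 2 * n" using c1 c2 by simp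
      hence "c dvd r" using ht by (metis add_diff_cancel_left')
      hence "c dvd gcd d r" using c2 by simp
      thus "is_unit c" using assms(5) by simp
    qed
    ultimately have "n dvd 1 + t + 2 * k" by (simp add: coprime_dvd_mult_right_iff)
    then obtain j where hj: "1 + t + 2 * k = n * j" by (auto simp: dvd_def)
    have "n * j > 0" using hj t1 k0 by linarith
    hence jp: "j > 0" using n2 by (simp add: zero_less_mult_iff)
    have "n * j < n * 2" using hj kle t1 by linarith
    hence "j < 2" using n2 by simp
    hence "j = 1" using jp by simp
    hence "1 + t + 2 * k = n" using hj by simp
    hence "d * n = 2 * ((d + r) div 2 + d * k) + 2 * n" using eq by simp
    hence "2 * ((d + r) div 2 + d * k) = n * (d - 2)" by (simp add: algebra_simps)
    moreover obtain i where "(d + r) div 2 + d * k = n * i" using ndvd by (auto simp: dvd_def)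
    ultimately have "n * (2 * i) = n * (d - 2)" by (simp add: algebra_simps)
    hence "2 * i = d - 2" using n2 by simp
    hence "d = 2 * (i + 1)" by simp
    thus False using assms(1) by simp
  qed
qed

end
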